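(* Let $D$ be an $n\times n$ distance matrix. If $D(\phi_1,\mathbf X)\ne D$ for some satisfying assignment $\mathbf X$ of $\phi_1$, then there is no graph realisation $(G=(V,E),\Phi)$ of $D$ with $|V|=n+1$.
   Context: $[n]=\{1,\dots,n\}$. An $n\times n$ matrix $D$ with non-negative integer entries is a distance matrix if (i) $D_{ii}=0$ for all $i$ and $D_{ij}>0$ for all $i\ne j$; (ii) $D$ is symmetric; (iii) $D_{iw}+D_{wj}\ge D_{ij}$ for all $i,j,w\in[n]$. A graph realisation of $D$ is a pair $(G,\Phi)$, where $G=(V,E)$ is a finite simple undirected unweighted graph and $\Phi:[n]\to V$ is an injective map such that $d_G(\Phi(i),\Phi(j))=D_{ij}$ for all $i,j\in[n]$; here $d_G$ denotes the shortest-path distance in $G$ (equal to $\infty$ if no path exists). The associated graph $G_D=(V_D,E_D)$ of $D$ is the simple unweighted graph with $V_D=\{v_1,\dots,v_n\}$ and $\{v_i,v_j\}\in E_D$ if and only if $D_{ij}=1$; $d_{G_D}$ is its shortest-path distance. The 2-CNF formula $\phi_1$ over variables $x_1,\dots,x_n$ is the conjunction of: the clause $(\neg x_i\vee\neg x_j)$ for every pair $i,j\in[n]$ with $D_{ij}>2$; and the clauses $(x_i)$ and $(x_j)$ for every pair $i,j\in[n]$ with $D_{ij}=2$ and $d_{G_D}(v_i,v_j)>2$. For a satisfying assignment $\mathbf X$, $G_{\phi_1,\mathbf X}$ is the simple graph on $\{v_1,\dots,v_{n+1}\}$ whose induced subgraph on $\{v_1,\dots,v_n\}$ is $G_D$ and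 in which $v_{n+1}$ is adjacent to $v_i$ ($i\in[n]$) exactly when $x_i$ is true in $\mathbf X$; $D(\phi_1,\mathbf X)$ is the $n\times n$ matrix of shortest-path distances in $G_{\phi_1,\mathbf X}$ between $v_i$ and $v_j$, $i,j\in[n]$. *)

theory Defs
  imports Main "HOL-Library.Extended_Nat"
begin

definition simple_graph :: "'v set \<Rightarrow> 'v set set \<Rightarrow> bool" where
  "simple_graph V E \<longleftrightarrow> finite V \<and> (\<forall>e\<in>E. \<exists>u v. e = {u, v} \<and> u \<noteq> v \<and> u \<in> V \<and> v \<in> V)"

definition is_walk :: "'v set \<Rightarrow> 'v set set \<Rightarrow> 'v list \<Rightarrow> bool" where
  "is_walk V E xs \<longleftrightarrow> xs \<noteq> [] \<and> set xs \<subseteq> V \<and>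
     (\<forall>k. Suc k < length xs \<longrightarrow> {xs ! k, xs ! Suc k} \<in> E)"

definition gdist :: "'v set \<Rightarrow> 'v set set \<Rightarrow> 'v \<Rightarrow> 'v \<Rightarrow> enat" where
  "gdist V E u v =
     (if \<exists>xs. is_walk V E xs \<and> hd xs = u \<and> last xs = v
      then enat (LEAST k. \<exists>xs. is_walk V E xs \<and> hd xs = u \<and> last xs = v \<and> length xs = Suc k)
      else \<infinity>)"

definition distance_matrix :: "nat \<Rightarrow> (nat \<Rightarrow> nat \<Rightarrow> nat) \<Rightarrow> bool" where
  "distance_matrix n D \<longleftrightarrow>
     (\<forall>i\<in>{1..n}. D i i = 0) \<and>
     (\<forall>i\<in>{1..n}. \<forall>j\<in>{1..n}. i \<noteq> j \<longrightarrow> D i j > 0) \<and>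
     (\<forall>i\<in>{1..n}. \<forall>j\<in>{1..n}. D i j = D j i) \<and>
     (\<forall>i\<in>{1..n}. \<forall>j\<in>{1..n}. \<forall>w\<in>{1..n}. D i w + D w j \<ge> D i j)"

definition graph_realisation ::
  "nat \<Rightarrow> (nat \<Rightarrow> nat \<Rightarrow> nat) \<Rightarrow> 'v set \<Rightarrow> 'v set set \<Rightarrow> (nat \<Rightarrow> 'v) \<Rightarrow> bool" where
  "graph_realisation n D V E \<Phi> \<longleftrightarrow>
     simple_graph V E \<and> \<Phi> ` {1..n} \<subseteq> V \<and> inj_on \<Phi> {1..n} \<and>
     (\<forall>i\<in>{1..n}. \<forall>j\<in>{1..n}. gdist V E (\<Phi> i) (\<Phi> j) = enat (D i j))"

text \<open>Associated graph G_D: vertex v_i is represented by the number i.\<close>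
definition GD_edges :: "nat \<Rightarrow> (nat \<Rightarrow> nat \<Rightarrow> nat) \<Rightarrow> nat set set" where
  "GD_edges n D = {{i, j} | i j. i \<in> {1..n} \<and> j \<in> {1..n} \<and> i \<noteq> j \<and> D i j = 1}"

definition dGD :: "nat \<Rightarrow> (nat \<Rightarrow> nat \<Rightarrow> nat) \<Rightarrow> nat \<Rightarrow> nat \<Rightarrow> enat" where
  "dGD n D i j = gdist {1..n} (GD_edges n D) i j"

datatype literal = Pos nat | Neg nat

type_synonym clause = "literal list"

fun lit_val :: "(nat \<Rightarrow> bool) \<Rightarrow> literal \<Rightarrow> bool" where
  "lit_val X (Pos i) = X i"
| "lit_val X (Neg i) = (\<not> X i)"

definition satisfies :: "(nat \<Rightarrow> bool) \<Rightarrow> clause set \<Rightarrow> bool" where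
  "satisfies X F \<longleftrightarrow> (\<forall>c\<in>F. \<exists>l\<in>set c. lit_val X l)"

definition phi1 :: "nat \<Rightarrow> (nat \<Rightarrow> nat \<Rightarrow> nat) \<Rightarrow> clause set" where
  "phi1 n D =
     {[Neg i, Neg j] | i j. i \<in> {1..n} \<and> j \<in> {1..n} \<and> D i j > 2}
   \<union> {[Pos i] | i j. i \<in> {1..n} \<and> j \<in> {1..n} \<and> D i j = 2 \<and> dGD n D i j > 2}
   \<union> {[Pos j] | i j. i \<in> {1..n} \<and> j \<in> {1..n} \<and> D i j = 2 \<and> dGD n D i j > 2}"

text \<open>G_{phi1,X}: vertices {1..n+1}, vertex n+1 is the new vertex.\<close>
definition GX_edges :: "nat \<Rightarrow> (nat \<Rightarrow> nat \<Rightarrow> nat) \<Rightarrow> (nat \<Rightarrow> bool) \<Rightarrow> nat set set" where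
  "GX_edges n D X = GD_edges n D \<union> {{i, Suc n} | i. i \<in> {1..n} \<and> X i}"

definition DX :: "nat \<Rightarrow> (nat \<Rightarrow> nat \<Rightarrow> nat) \<Rightarrow> (nat \<Rightarrow> bool) \<Rightarrow> nat \<Rightarrow> nat \<Rightarrow> enat" where
  "DX n D X i j = gdist {1..Suc n} (GX_edges n D X) i j"

end

theory Submission
  imports Defs
begin

lemma walk_single[simp]: "is_walk V E [x] \<longleftrightarrow> x \<in> V"
  unfolding is_walk_def by auto

lemma walk_cons2[simp]:
  "is_walk V E (x # y # zs) \<longleftrightarrow> x \<in> V \<and> {x,y} \<in> E \<and> is_walk V E (y # zs)"
proof
  assume h: "is_walk V E (x # y # zs)"
  have "Suc 0 < length (x # y # zs)" by simp
  then have "{(x#y#zs) ! 0, (x#y#zs) ! Suc 0} \<in> E" using h unfolding is_walk_def by blast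
  then have "{x,y} \<in> E" by simp
  moreover have "\<forall>k. Suc k < length (y # zs) \<longrightarrow> {(y#zs) ! k, (y#zs) ! Suc k} \<in> E"
  proof (intro allI impI)
    fix k assume "Suc k < length (y # zs)"
    then have "Suc (Suc k) < length (x # y # zs)" by simp
    then have "{(x#y#zs) ! Suc k, (x#y#zs) ! Suc (Suc k)} \<in> E" using h unfolding is_walk_def by blast
    then show "{(y#zs) ! k, (y#zs) ! Suc k} \<in> E" by simp
  qed
  ultimately show "x \<in> V \<and> {x,y} \<in> E \<and> is_walk V E (y # zs)" using h unfolding is_walk_def by auto
next
  assume h: "x \<in> V \<and> {x,y} \<in> E \<and> is_walk V E (y # zs)"
  show "is_walk V E (x # y # zs)" unfolding is_walk_def
  proof (intro conjI allI impI)
    fix k assume k: "Suc k < length (x # y # zs)"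
    show "{(x#y#zs) ! k, (x#y#zs) ! Suc k} \<in> E"
    proof (cases k)
      case 0 then show ?thesis using h by simp
    next
      case (Suc k') then show ?thesis using h k unfolding is_walk_def by auto
    qed
  qed (use h in \<open>auto simp: is_walk_def\<close>)
qed

lemma walk_nonempty: "is_walk V E xs \<Longrightarrow> xs \<noteq> []"
  unfolding is_walk_def by auto

lemma walk_append:
  "is_walk V E xs \<Longrightarrow> is_walk V E ys \<Longrightarrow> last xs = hd ys \<Longrightarrow> is_walk V E (xs @ tl ys)"
proof (induction xs)
  case Nil then show ?case by (simp add: is_walk_def)
next
  case (Cons x xs)
  note IH = Cons.IH and prems = Cons.prems
  show ?case
  proof (cases xs)
    case Nil
    then have "ys \<noteq> []" using prems walk_nonempty by blast
    then show ?thesis using prems Nil by (metis append.left_neutral append_Cons hd_Cons_tl last.simps)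
  next
    case (Cons y zs)
    have "is_walk V E ((y#zs) @ tl ys)" using IH prems Cons by auto
    then show ?thesis using prems Cons by simp
  qed
qed

lemma gdist_le_walk:
  assumes "is_walk V E xs" "hd xs = u" "last xs = v"
  shows "gdist V E u v \<le> enat (length xs - 1)"
proof -
  have ne: "xs \<noteq> []" using assms walk_nonempty by blast
  have ex: "\<exists>xs. is_walk V E xs \<and> hd xs = u \<and> last xs = v" using assms by blast
  have "(LEAST k. \<exists>xs. is_walk V E xs \<and> hd xs = u \<and> last xs = v \<and> length xs = Suc k) \<le> length xs - 1"
    by (rule Least_le) (use assms ne in auto)
  then show ?thesis unfolding gdist_def using ex by simp
qed

lemma gdist_enat_walk:
  assumes "gdist V E u v = enat m"
  shows "\<exists>xs. is_walk V E xs \<and> hd xs = u \<and> last xs = v \<and> length xs = Suc m"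
proof -
  have ex: "\<exists>xs. is_walk V E xs \<and> hd xs = u \<and> last xs = v"
    using assms unfolding gdist_def by (metis infinity_ne_i0 enat.distinct(2))
  then obtain xs where xs: "is_walk V E xs" "hd xs = u" "last xs = v" by blast
  then have "xs \<noteq> []" using walk_nonempty by blast
  then have "\<exists>k xs. is_walk V E xs \<and> hd xs = u \<and> last xs = v \<and> length xs = Suc k"
    using xs by (intro exI[of _ "length xs - 1"] exI[of _ xs]) auto
  from LeastI_ex[OF this] have
    "\<exists>xs. is_walk V E xs \<and> hd xs = u \<and> last xs = v \<and>
      length xs = Suc (LEAST k. \<exists>xs. is_walk V E xs \<and> hd xs = u \<and> last xs = v \<and> length xs = Suc k)" .
  moreover have "m = (LEAST k. \<exists>xs. is_walk V E xs \<and> hd xs = u \<and> last xs = v \<and> length xs = Suc k)"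
    using assms ex unfolding gdist_def by simp
  ultimately show ?thesis by simp
qed

lemma gdist_triangle: "gdist V E a c \<le> gdist V E a b + gdist V E b c"
proof (cases "gdist V E a b")
  case (enat p)
  show ?thesis
  proof (cases "gdist V E b c")
    case (enat q)
    obtain xs where xs: "is_walk V E xs" "hd xs = a" "last xs = b" "length xs = Suc p"
      using gdist_enat_walk[OF \<open>gdist V E a b = enat p\<close>] by blast
    obtain ys where ys: "is_walk V E ys" "hd ys = b" "last ys = c" "length ys = Suc q"
      using gdist_enat_walk[OF enat] by blast
    have w: "is_walk V E (xs @ tl ys)" using walk_append[OF xs(1) ys(1)] xs ys by simp
    have "hd (xs @ tl ys) = a" using xs by (cases xs) auto
    moreover have "last (xs @ tl ys) = c"
      proof (cases "tl ys = []")
      case True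
      have "ys \<noteq> []" using ys(4) by auto
      then have "ys = [hd ys]" using True by (metis list.collapse)
      then have "c = b" using ys(2,3) by (metis last_ConsL)
      then show ?thesis using True xs(3) by simp
    next
      case False
      have "ys \<noteq> []" using ys(4) by auto
      then have "last (tl ys) = last ys" using False by (metis last_tl)
      then show ?thesis using False ys(3) by simp
    qed
    ultimately have "gdist V E a c \<le> enat (length (xs @ tl ys) - 1)" using gdist_le_walk[OF w] by blast
    also have "length (xs @ tl ys) - 1 = p + q" using xs ys by simp
    finally show ?thesis using \<open>gdist V E a b = enat p\<close> enat by simp
  qed (simp)
qed (simp)

lemma gdist_mono:
  assumes "V \<subseteq> V'" "E \<subseteq> E'"
  shows "gdist V' E' a b \<le> gdist V E a b"
proof (cases "gdist V E a b")
  case (enat m)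
  obtain xs where xs: "is_walk V E xs" "hd xs = a" "last xs = b" "length xs = Suc m"
    using gdist_enat_walk[OF enat] by blast
  have "is_walk V' E' xs" using xs(1) assms unfolding is_walk_def by blast
  then show ?thesis using gdist_le_walk[of V' E' xs a b] xs enat by simp
qed simp


lemma GX_Suc_edge:
  assumes "{a, Suc n} \<in> GX_edges n D X"
  shows "a \<in> {1..n} \<and> X a"
  using assms unfolding GX_edges_def GD_edges_def
  by (auto simp: doubleton_eq_iff)

lemma GX_small_edge:
  assumes "{a, b} \<in> GX_edges n D X" "a \<in> {1..n}" "b \<in> {1..n}"
  shows "{a, b} \<in> GD_edges n D"
  using assms unfolding GX_edges_def
  by (auto simp: doubleton_eq_iff)

lemma GD_edge_D:
  assumes "{a, b} \<in> GD_edges n D" "distance_matrix n D"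
  shows "D a b = 1 \<and> a \<noteq> b \<and> a \<in> {1..n} \<and> b \<in> {1..n}"
  using assms unfolding GD_edges_def distance_matrix_def
  by (auto simp: doubleton_eq_iff)

lemma GX_new_edge: "a \<in> {1..n} \<Longrightarrow> X a \<Longrightarrow> {a, Suc n} \<in> GX_edges n D X"
  unfolding GX_edges_def by blast

lemma GD_sub_GX: "GD_edges n D \<subseteq> GX_edges n D X"
  unfolding GX_edges_def by auto

lemma partB:
  assumes dm: "distance_matrix n D" and sat: "satisfies X (phi1 n D)"
  shows "i \<in> {1..n} \<Longrightarrow> j \<in> {1..n} \<Longrightarrow> is_walk {1..Suc n} (GX_edges n D X) ys \<Longrightarrow>
     hd ys = i \<Longrightarrow> last ys = j \<Longrightarrow> length ys = Suc k \<Longrightarrow> D i j \<le> k"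
proof (induction k arbitrary: i ys rule: less_induct)
  case (less k)
  have tri: "\<And>a b c. a \<in> {1..n} \<Longrightarrow> b \<in> {1..n} \<Longrightarrow> c \<in> {1..n} \<Longrightarrow> D a c \<le> D a b + D b c"
    using dm unfolding distance_matrix_def by blast
  show ?case
  proof (cases ys)
    case Nil then show ?thesis using less by simp
  next
    case (Cons x rest)
    note ys = this
    show ?thesis
    proof (cases rest)
      case Nil
      then have "i = j" using less ys by simp
      then show ?thesis using dm less(2) unfolding distance_matrix_def by simp
    next
      case (Cons y zs)
      have x: "x = i" using less ys by simp
      have e1: "{i, y} \<in> GX_edges n D X" and w1: "is_walk {1..Suc n} (GX_edges n D X) (y # zs)"
        using less(4) ys Cons x by auto
      have yV: "y \<in> {1..Suc n}" using w1 by (cases zs) auto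
      obtain k' where k': "k = Suc k'" using less(7) ys Cons by auto
      show ?thesis
      proof (cases "y = Suc n")
        case False
        then have yn: "y \<in> {1..n}" using yV by auto
        have "{i, y} \<in> GD_edges n D" using GX_small_edge[OF e1 less(2) yn] .
        then have Diy: "D i y = 1" using GD_edge_D dm by blast
        have "D y j \<le> k'"
          using less.IH[of k' y "y # zs"] k' yn less(3) w1 less(6,7) ys Cons by simp
        then show ?thesis using tri[OF less(2) yn less(3)] Diy k' by simp
      next
        case True
        have Xi: "X i" using GX_Suc_edge[of i n D X] e1 True by simp
        obtain z ws where zs: "zs = z # ws"
          using True less(3,6) ys Cons by (cases zs) auto
        have e2: "{Suc n, z} \<in> GX_edges n D X" and w2: "is_walk {1..Suc n} (GX_edges n D X) (z # ws)"
          using w1 zs True by auto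
        have "{z, Suc n} \<in> GX_edges n D X" using e2 by (simp add: insert_commute)
        then have zn: "z \<in> {1..n}" and Xz: "X z" using GX_Suc_edge by blast+
        obtain k'' where k'': "k' = Suc k''" using less(7) ys Cons zs k' by auto
        have Djz: "D z j \<le> k''"
          using less.IH[of k'' z "z # ws"] k' k'' zn less(3) w2 less(6,7) ys Cons zs by simp
        have "D i z \<le> 2"
        proof (rule ccontr)
          assume "\<not> D i z \<le> 2"
          then have "2 < D i z" by simp
          then have "[Neg i, Neg z] \<in> phi1 n D" using less(2) zn unfolding phi1_def by blast
          then show False using sat Xi Xz unfolding satisfies_def by fastforce
        qed
        then show ?thesis using tri[OF less(2) zn less(3)] Djz k' k'' by simp
      qed
    qed
  qed
qed

lemma partA:
  assumes dm: "distance_matrix n D" and sat: "satisfies X (phi1 n D)"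
    and real: "graph_realisation n D V E \<Phi>"
    and Vu: "V = insert u (\<Phi> ` {1..n})" and un: "u \<notin> \<Phi> ` {1..n}"
  shows "i \<in> {1..n} \<Longrightarrow> j \<in> {1..n} \<Longrightarrow> is_walk V E ys \<Longrightarrow>
     hd ys = \<Phi> i \<Longrightarrow> last ys = \<Phi> j \<Longrightarrow> length ys = Suc k \<Longrightarrow> DX n D X i j \<le> enat k"
proof (induction k arbitrary: i ys rule: less_induct)
  case (less k)
  have sg: "simple_graph V E" and inj: "inj_on \<Phi> {1..n}"
    and hP: "\<And>a b. a \<in> {1..n} \<Longrightarrow> b \<in> {1..n} \<Longrightarrow> gdist V E (\<Phi> a) (\<Phi> b) = enat (D a b)"
    using real unfolding graph_realisation_def by auto
  have noloop: "\<And>x. {x, x} \<notin> E" using sg unfolding simple_graph_def by (auto simp: doubleton_eq_iff)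
  have Dii: "\<And>a. a \<in> {1..n} \<Longrightarrow> D a a = 0" and Dpos: "\<And>a b. a \<in> {1..n} \<Longrightarrow> b \<in> {1..n} \<Longrightarrow> a \<noteq> b \<Longrightarrow> D a b > 0"
    using dm unfolding distance_matrix_def by auto
  have DXtri: "\<And>a b c. DX n D X a c \<le> DX n D X a b + DX n D X b c"
    unfolding DX_def by (rule gdist_triangle)
  have DXrefl: "\<And>a. a \<in> {1..n} \<Longrightarrow> DX n D X a a \<le> enat 0"
  proof -
    fix a :: nat assume a: "a \<in> {1..n}"
    have "is_walk {1..Suc n} (GX_edges n D X) [a]" using a by simp
    then show "DX n D X a a \<le> enat 0"
      unfolding DX_def using gdist_le_walk[of "{1..Suc n}" "GX_edges n D X" "[a]" a a] by simp
  qed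
  have DXedge: "\<And>a b. a \<in> {1..n} \<Longrightarrow> b \<in> {1..n} \<Longrightarrow> D a b = 1 \<Longrightarrow> DX n D X a b \<le> enat 1"
  proof -
    fix a b assume a: "a \<in> {1..n}" and b: "b \<in> {1..n}" and ab: "D a b = 1"
    have "a \<noteq> b" using ab Dii a by auto
    then have "{a, b} \<in> GX_edges n D X" using a b ab unfolding GX_edges_def GD_edges_def by blast
    then show "DX n D X a b \<le> enat 1"
      unfolding DX_def using gdist_le_walk[of "{1..Suc n}" "GX_edges n D X" "[a, b]"] a b by auto
  qed
  show ?case
  proof (cases ys)
    case Nil then show ?thesis using less by simp
  next
    case (Cons x rest)
    note ys = this
    show ?thesis
    proof (cases rest)
      case Nil
      then have "\<Phi> i = \<Phi> j" using less ys by simp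
      then have "i = j" using inj less(2,3) inj_on_eq_iff by metis
      then show ?thesis using DXrefl less(2,7) ys Nil by (simp add: zero_enat_def)
    next
      case (Cons y zs)
      have x: "x = \<Phi> i" using less ys by simp
      have e1: "{\<Phi> i, y} \<in> E" and w1: "is_walk V E (y # zs)"
        using less(4) ys Cons x by auto
      have yV: "y \<in> V" using w1 by (cases zs) auto
      obtain k' where k': "k = Suc k'" using less(7) ys Cons by auto
      show ?thesis
      proof (cases "y = u")
        case False
        then obtain a where a: "a \<in> {1..n}" and ya: "y = \<Phi> a" using yV Vu by auto
        have "gdist V E (\<Phi> i) (\<Phi> a) \<le> enat 1"
          using gdist_le_walk[of V E "[\<Phi> i, \<Phi> a]"] e1 ya yV less(2) Vu by auto
        then have Dia: "D i a \<le> 1" using hP[OF less(2) a] by simp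
        have IH: "DX n D X a j \<le> enat k'"
          using less.IH[of k' a "y # zs"] k' a less(3) w1 less(6,7) ys Cons ya by simp
        have "DX n D X i a \<le> enat 1"
        proof (cases "D i a = 0")
          case True
          then have "i = a" using Dpos less(2) a by (metis less_irrefl)
          then have "DX n D X i a \<le> enat 0" using DXrefl a by simp
          also have "enat 0 \<le> enat 1" by simp
          finally show ?thesis .
        next
          case False then show ?thesis using DXedge less(2) a Dia by simp
        qed
        then have "DX n D X i a + DX n D X a j \<le> enat 1 + enat k'" using IH by (rule add_mono)
        with DXtri[of i j a] have "DX n D X i j \<le> enat 1 + enat k'" by (rule order_trans)
        then show ?thesis using k' by (simp add: one_enat_def)
      next
        case True
        obtain z ws where zs: "zs = z # ws"
          using True less(3,6) ys Cons un by (cases zs) auto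
        have e2: "{u, z} \<in> E" and w2: "is_walk V E (z # ws)"
          using w1 zs True by auto
        have zV: "z \<in> V" using w2 by (cases ws) auto
        have "z \<noteq> u" using e2 noloop by blast
        then obtain b where b: "b \<in> {1..n}" and zb: "z = \<Phi> b" using zV Vu by auto
        obtain k'' where k'': "k' = Suc k''" using less(7) ys Cons zs k' by auto
        have IH: "DX n D X b j \<le> enat k''"
          using less.IH[of k'' b "z # ws"] k' k'' b less(3) w2 less(6,7) ys Cons zs zb by simp
        have "gdist V E (\<Phi> i) (\<Phi> b) \<le> enat 2"
        proof -
          have "\<Phi> i \<in> V" "u \<in> V" using less(2) Vu by auto
          then have "is_walk V E [\<Phi> i, u, \<Phi> b]" using e1 e2 True zb zV by simp
          from gdist_le_walk[OF this, of "\<Phi> i" "\<Phi> b"] show ?thesis by (simp add: numeral_2_eq_2)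
        qed
        then have Dib: "D i b \<le> 2" using hP[OF less(2) b] by simp
        have "DX n D X i b \<le> enat 2"
        proof -
          consider "D i b = 0" | "D i b = 1" | "D i b = 2" using Dib by linarith
          then show ?thesis
          proof cases
            case 1
            then have "i = b" using Dpos less(2) b by (metis less_irrefl)
            then have "DX n D X i b \<le> enat 0" using DXrefl b by simp
            also have "enat 0 \<le> enat 2" by simp
            finally show ?thesis .
          next
            case 2
            then have "DX n D X i b \<le> enat 1" using DXedge less(2) b by simp
            also have "enat 1 \<le> enat 2" by simp
            finally show ?thesis .
          next
            case 3
            show ?thesis
            proof (cases "dGD n D i b > 2")
              case False
              have "DX n D X i b \<le> dGD n D i b" unfolding DX_def dGD_def
                by (rule gdist_mono) (auto simp: GD_sub_GX)
              also have "dGD n D i b \<le> 2" using False by (simp add: not_less)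
              also have "(2::enat) = enat 2" by (simp add: numeral_eq_enat)
              finally show ?thesis .
            next
              case True
              have A: "[Pos i] \<in> {[Pos i] | i j. i \<in> {1..n} \<and> j \<in> {1..n} \<and> D i j = 2 \<and> dGD n D i j > 2}"
                using True 3 less(2) b by blast
              have B: "[Pos b] \<in> {[Pos j] | i j. i \<in> {1..n} \<and> j \<in> {1..n} \<and> D i j = 2 \<and> dGD n D i j > 2}"
                using True 3 less(2) b by blast
              have "[Pos i] \<in> phi1 n D" unfolding phi1_def by (rule UnI1[OF UnI2[OF A]])
              moreover have "[Pos b] \<in> phi1 n D" unfolding phi1_def by (rule UnI2[OF B])
              ultimately have "[Pos i] \<in> phi1 n D" "[Pos b] \<in> phi1 n D" by blast+
              then have "\<exists>l\<in>set [Pos i]. lit_val X l" "\<exists>l\<in>set [Pos b]. lit_val X l"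
                using sat unfolding satisfies_def by auto
              then have Xi: "X i" and Xb: "X b" by simp_all
              have e1: "{i, Suc n} \<in> GX_edges n D X" and e2: "{b, Suc n} \<in> GX_edges n D X"
                using Xi Xb less(2) b GX_new_edge by blast+
              have e2': "{Suc n, b} \<in> GX_edges n D X" using e2 by (simp only: insert_commute)
              have "is_walk {1..Suc n} (GX_edges n D X) [i, Suc n, b]"
                using less(2) b e1 e2' by simp
              from gdist_le_walk[OF this, of i b] show ?thesis unfolding DX_def by (simp add: numeral_2_eq_2)
            qed
          qed
        qed
        then have "DX n D X i b + DX n D X b j \<le> enat 2 + enat k''" using IH by (rule add_mono)
        with DXtri[of i j b] have "DX n D X i j \<le> enat 2 + enat k''" by (rule order_trans)
        then show ?thesis using k' k'' by simp
      qed
    qed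
  qed
qed

theorem mainTheorem14:
  fixes n :: nat and D :: "nat \<Rightarrow> nat \<Rightarrow> nat" and X :: "nat \<Rightarrow> bool"
  assumes "distance_matrix n D"
    and "satisfies X (phi1 n D)"
    and "\<exists>i\<in>{1..n}. \<exists>j\<in>{1..n}. DX n D X i j \<noteq> enat (D i j)"
  shows "\<not> (\<exists>(V :: 'v set) E \<Phi>. graph_realisation n D V E \<Phi> \<and> card V = n + 1)"
proof
  assume "\<exists>(V :: 'v set) E \<Phi>. graph_realisation n D V E \<Phi> \<and> card V = n + 1"
  then obtain V :: "'v set" and E \<Phi> where real: "graph_realisation n D V E \<Phi>" and cV: "card V = n + 1"
    by blast
  have fin: "finite V" and sub: "\<Phi> ` {1..n} \<subseteq> V" and inj: "inj_on \<Phi> {1..n}"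
    and hP: "\<And>a b. a \<in> {1..n} \<Longrightarrow> b \<in> {1..n} \<Longrightarrow> gdist V E (\<Phi> a) (\<Phi> b) = enat (D a b)"
  proof -
    have "simple_graph V E" using real unfolding graph_realisation_def by blast
    then show "finite V" unfolding simple_graph_def by blast
    show "\<Phi> ` {1..n} \<subseteq> V" using real unfolding graph_realisation_def by blast
    show "inj_on \<Phi> {1..n}" using real unfolding graph_realisation_def by blast
    show "\<And>a b. a \<in> {1..n} \<Longrightarrow> b \<in> {1..n} \<Longrightarrow> gdist V E (\<Phi> a) (\<Phi> b) = enat (D a b)"
      using real unfolding graph_realisation_def by blast
  qed
  have "card (\<Phi> ` {1..n}) = n" using card_image[OF inj] by simp
  then have "card (V - \<Phi> ` {1..n}) = 1" using card_Diff_subset[OF finite_subset[OF sub fin] sub] cV by simp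
  then obtain u where u: "V - \<Phi> ` {1..n} = {u}" using card_1_singletonE by blast
  then have Vu: "V = insert u (\<Phi> ` {1..n})" and un: "u \<notin> \<Phi> ` {1..n}" using sub by auto
  have eq: "DX n D X i j = enat (D i j)" if i: "i \<in> {1..n}" and j: "j \<in> {1..n}" for i j
  proof -
    obtain ys where ys: "is_walk V E ys" "hd ys = \<Phi> i" "last ys = \<Phi> j" "length ys = Suc (D i j)"
      using gdist_enat_walk[OF hP[OF i j]] by blast
    have le: "DX n D X i j \<le> enat (D i j)"
      using partA[OF assms(1,2) real Vu un i j ys] .
    then obtain m where m: "DX n D X i j = enat m" by (cases "DX n D X i j") auto
    then obtain zs where zs: "is_walk {1..Suc n} (GX_edges n D X) zs" "hd zs = i" "last zs = j" "length zs = Suc m"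
      using gdist_enat_walk[OF m[unfolded DX_def]] by blast
    have "D i j \<le> m" using partB[OF assms(1,2) i j zs] .
    then show ?thesis using le m by simp
  qed
  then show False using assms(3) by auto
qed

end
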